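(* Let $m\ge 2$, let $n_1,\dots,n_m\ge 4$ be even, and let $\mathcal{C}=\mathcal{C}(C_{n_1},\dots,C_{n_m})$ be the even chain cycle. Then the vertex cover number of its strong resolving graph is $$\alpha(\mathcal{C}_{SR})=1+\sum_{i=1}^{m}\frac{n_i-2}{2}.$$
   Context: Let $C_{n_1},\dots,C_{n_m}$ be pairwise disjoint cycles, $V(C_{n_i})=\{v^i_1,\dots,v^i_{n_i}\}$ with $v^i_j$ adjacent to $v^i_{j+1}$ (indices mod $n_i$). The even chain cycle (all $n_i$ even) is obtained by identifying $v^i_{n_i/2+1}$ with $v^{i+1}_1$ for $i=1,\dots,m-1$. A vertex $u$ is maximally distant from $v$ if every neighbor $w$ of $u$ satisfies $d(v,w)\le d(u,v)$; $u,v$ are mutually maximally distant if each is maximally distant from the other. The strong resolving graph $G_{SR}$ of a connected graph $G$ has vertex set $V(G)$, with $u,v$ adjacent iff they are mutually maximally distant in $G$. $\alpha(H)$ denotes the minimum size of a vertex cover of $H$. *)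

theory Defs
  imports Main
begin

inductive walk :: "('a \<Rightarrow> 'a \<Rightarrow> bool) \<Rightarrow> nat \<Rightarrow> 'a \<Rightarrow> 'a \<Rightarrow> bool"
  for E where
  walk_nil: "walk E 0 u u"
| walk_cons: "E u w \<Longrightarrow> walk E k w v \<Longrightarrow> walk E (Suc k) u v"

definition gdist :: "('a \<Rightarrow> 'a \<Rightarrow> bool) \<Rightarrow> 'a \<Rightarrow> 'a \<Rightarrow> nat" where
  "gdist E u v = (LEAST k. walk E k u v)"

definition max_distant :: "('a \<Rightarrow> 'a \<Rightarrow> bool) \<Rightarrow> 'a \<Rightarrow> 'a \<Rightarrow> bool" where
  "max_distant E u v \<longleftrightarrow> (\<forall>w. E u w \<longrightarrow> gdist E v w \<le> gdist E u v)"

definition mutually_max_distant :: "('a \<Rightarrow> 'a \<Rightarrow> bool) \<Rightarrow> 'a \<Rightarrow> 'a \<Rightarrow> bool" where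
  "mutually_max_distant E u v \<longleftrightarrow> max_distant E u v \<and> max_distant E v u"

definition strong_resolving_adj :: "'a set \<Rightarrow> ('a \<Rightarrow> 'a \<Rightarrow> bool) \<Rightarrow> 'a \<Rightarrow> 'a \<Rightarrow> bool" where
  "strong_resolving_adj V E u v \<longleftrightarrow> u \<in> V \<and> v \<in> V \<and> mutually_max_distant E u v"

definition is_vertex_cover :: "'a set \<Rightarrow> ('a \<Rightarrow> 'a \<Rightarrow> bool) \<Rightarrow> 'a set \<Rightarrow> bool" where
  "is_vertex_cover V E S \<longleftrightarrow> S \<subseteq> V \<and> (\<forall>u\<in>V. \<forall>v\<in>V. E u v \<longrightarrow> u \<in> S \<or> v \<in> S)"

definition vertex_cover_number :: "'a set \<Rightarrow> ('a \<Rightarrow> 'a \<Rightarrow> bool) \<Rightarrow> nat" where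
  "vertex_cover_number V E = Min {card S | S. is_vertex_cover V E S}"

text \<open>Cycles indexed i = 0..m-1; vertex v^{i+1}_{j+1} of the paper is (i,j), j < n i.
  The vertex (i,0) for i \<ge> 1 (i.e. v^{i+1}_1) is identified with (i-1, n(i-1) div 2)
  (i.e. v^{i}_{n_i/2+1}); canon picks the representative.\<close>
definition chain_canon :: "(nat \<Rightarrow> nat) \<Rightarrow> nat \<times> nat \<Rightarrow> nat \<times> nat" where
  "chain_canon n p = (if snd p = 0 \<and> fst p > 0 then (fst p - 1, n (fst p - 1) div 2) else p)"

definition chain_vertices :: "nat \<Rightarrow> (nat \<Rightarrow> nat) \<Rightarrow> (nat \<times> nat) set" where
  "chain_vertices m n = chain_canon n ` {(i, j). i < m \<and> j < n i}"

definition chain_adj :: "nat \<Rightarrow> (nat \<Rightarrow> nat) \<Rightarrow> nat \<times> nat \<Rightarrow> nat \<times> nat \<Rightarrow> bool" where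
  "chain_adj m n u v \<longleftrightarrow> (\<exists>i j. i < m \<and> j < n i \<and>
      ((u = chain_canon n (i, j) \<and> v = chain_canon n (i, (j + 1) mod n i)) \<or>
       (v = chain_canon n (i, j) \<and> u = chain_canon n (i, (j + 1) mod n i))))"

end

theory Submission
  imports Defs
begin

lemma walk_snoc: "walk E k a b \<Longrightarrow> E b c \<Longrightarrow> walk E (Suc k) a c"
  by (induction rule: walk.induct) (auto intro: walk.intros)

lemma walk_app: "walk E k1 a b \<Longrightarrow> walk E k2 b c \<Longrightarrow> walk E (k1+k2) a c"
  by (induction rule: walk.induct) (auto intro: walk.intros)

lemma walk_rev: assumes "\<And>x y. E x y \<Longrightarrow> E y x" shows "walk E k a b \<Longrightarrow> walk E k b a"
  by (induction rule: walk.induct) (auto intro: walk.intros walk_snoc assms)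

lemma gdist_le: "walk E k u v \<Longrightarrow> gdist E u v \<le> k"
  unfolding gdist_def by (rule Least_le)

lemma gdist_ge: assumes "walk E k0 u v" "\<And>k. walk E k u v \<Longrightarrow> c \<le> k" shows "c \<le> gdist E u v"
proof -
  have "walk E (gdist E u v) u v" unfolding gdist_def by (rule LeastI[of _ k0]) (rule assms(1))
  thus ?thesis by (rule assms(2))
qed

lemma pot: assumes "\<And>a b. E a b \<Longrightarrow> f a \<le> f b + 1 \<and> f b \<le> f a + (1::nat)"
  shows "walk E k u v \<Longrightarrow> f v \<le> f u + k \<and> f u \<le> f v + k"
  by (induction rule: walk.induct) (use assms in fastforce)+

definition Pf :: "(nat \<Rightarrow> nat) \<Rightarrow> nat \<Rightarrow> nat" where "Pf n i = (\<Sum>l<i. n l div 2)"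

lemma Pf_Suc: "Pf n (Suc i) = Pf n i + n i div 2" by (simp add: Pf_def)
lemma Pf_mono: "i \<le> k \<Longrightarrow> Pf n i \<le> Pf n k"
  unfolding Pf_def by (rule sum_mono2) auto

lemma adj_sym: "chain_adj m n u v \<Longrightarrow> chain_adj m n v u"
  unfolding chain_adj_def by blast

lemma edge: "i < m \<Longrightarrow> j < n i \<Longrightarrow> chain_adj m n (chain_canon n (i,j)) (chain_canon n (i,(j+1) mod n i))"
  unfolding chain_adj_def by blast

lemma cyc_fwd: assumes "i < m" "a < n i" shows "walk (chain_adj m n) k (chain_canon n (i,a)) (chain_canon n (i,(a+k) mod n i))"
proof (induction k)
  case 0
  show ?case using assms by (simp add: walk_nil)
next
  case (Suc k)
  have "chain_adj m n (chain_canon n (i,(a+k) mod n i)) (chain_canon n (i,((a+k) mod n i+1) mod n i))"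
    by (rule edge) (use assms in auto)
  moreover have "((a+k) mod n i+1) mod n i = (a + Suc k) mod n i" by (simp add: mod_Suc_eq)
  ultimately show ?case using Suc walk_snoc by fastforce
qed


locale ch = fixes m :: nat and n :: "nat \<Rightarrow> nat"
  assumes m2: "m \<ge> 2" and nn: "\<forall>i<m. n i \<ge> 4 \<and> even (n i)"
begin

abbreviation "E \<equiv> chain_adj m n"
abbreviation "c \<equiv> chain_canon n"

lemma n4: "i < m \<Longrightarrow> n i \<ge> 4" using nn by auto
lemma nev: "i < m \<Longrightarrow> n i = 2 * (n i div 2)" using nn by auto

lemma wrev: "walk E k a b \<Longrightarrow> walk E k b a"
  by (rule walk_rev) (auto intro: adj_sym)

lemma fwd: "i < m \<Longrightarrow> a < n i \<Longrightarrow> walk E k (c (i,a)) (c (i,(a+k) mod n i))"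
  by (rule cyc_fwd)

lemma walk_ab: assumes "i < m" "b \<le> a" "a < n i" shows "walk E (a - b) (c (i,a)) (c (i,b))"
proof -
  have "walk E (a-b) (c (i,b)) (c (i,(b+(a-b)) mod n i))" using assms by (intro fwd) auto
  moreover have "(b+(a-b)) mod n i = a" using assms by auto
  ultimately show ?thesis using wrev by auto
qed

lemma walk_ba: assumes "i < m" "b \<le> a" "a < n i" shows "walk E (a - b) (c (i,b)) (c (i,a))"
  using walk_ab[OF assms] wrev by auto

lemma walk_0b: assumes "i < m" "b < n i" shows "walk E (n i - b) (c (i,0)) (c (i,b))"
proof -
  have "walk E (n i - b) (c (i,b)) (c (i,(b+(n i - b)) mod n i))" using assms by (intro fwd) auto
  moreover have "(b+(n i - b)) mod n i = 0" using assms by auto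
  ultimately show ?thesis using wrev by auto
qed

lemma cyc_near: assumes "i < m" "a < n i" "b < n i"
  shows "\<exists>k \<le> n i div 2. walk E k (c (i,a)) (c (i,b))"
proof (cases "b \<le> a")
  case True
  show ?thesis
  proof (cases "a - b \<le> n i div 2")
    case True
    then show ?thesis using walk_ab[OF assms(1) \<open>b \<le> a\<close> assms(2)] by blast
  next
    case False
    have w: "walk E (n i - a) (c (i,0)) (c (i,a))" using walk_0b assms by auto
    have w2: "walk E b (c (i,0)) (c (i,b))" using walk_ba[of i 0 b] assms by auto
    have "walk E (n i - a + b) (c (i,a)) (c (i,b))" using walk_app[OF wrev[OF w] w2] .
    moreover have "n i - a + b \<le> n i div 2" using False True assms nev[OF assms(1)] by linarith
    ultimately show ?thesis by blast
  qed
next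
  case False
  show ?thesis
  proof (cases "b - a \<le> n i div 2")
    case True
    then show ?thesis using walk_ba[OF assms(1), of a b] False assms by auto
  next
    case F2: False
    have w: "walk E (n i - b) (c (i,0)) (c (i,b))" using walk_0b assms by auto
    have w2: "walk E a (c (i,0)) (c (i,a))" using walk_ba[of i 0 a] assms by auto
    have "walk E (a + (n i - b)) (c (i,a)) (c (i,b))" using walk_app[OF wrev[OF w2] w] .
    moreover have "a + (n i - b) \<le> n i div 2" using False F2 assms nev[OF assms(1)] by linarith
    ultimately show ?thesis by blast
  qed
qed

lemma chainG: "i \<le> k \<Longrightarrow> k < m \<Longrightarrow> walk E (Pf n k - Pf n i) (c (i,0)) (c (k,0))"
proof (induction k)
  case 0
  then show ?case by (auto intro: walk_nil)
next
  case (Suc k)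
  show ?case
  proof (cases "i = Suc k")
    case True then show ?thesis by (auto intro: walk_nil)
  next
    case False
    hence ik: "i \<le> k" "k < m" using Suc by auto
    have w1: "walk E (Pf n k - Pf n i) (c (i,0)) (c (k,0))" using Suc ik by auto
    have w2: "walk E (n k div 2) (c (k,0)) (c (k,(0 + n k div 2) mod n k))" using fwd[of k 0 "n k div 2"] ik n4[of k] by auto
    have eq: "c (k,(0 + n k div 2) mod n k) = c (Suc k, 0)" using n4[of k] ik
      by (auto simp add: chain_canon_def)
    have "walk E (Pf n k - Pf n i + n k div 2) (c (i,0)) (c (Suc k,0))" using walk_app[OF w1 w2] eq by simp
    moreover have "Pf n k - Pf n i + n k div 2 = Pf n (Suc k) - Pf n i" using Pf_mono[OF ik(1), of n] Pf_Suc[of n k] by simp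
    ultimately show ?thesis by simp
  qed
qed


definition xp :: "nat \<times> nat \<Rightarrow> nat" where
  "xp p = Pf n (fst p) + min (snd p) (n (fst p) - snd p)"

lemma xp_canon: assumes "i < m" "j < n i" shows "xp (c (i,j)) = xp (i,j)"
proof (cases "j = 0 \<and> i > 0")
  case True
  then obtain k where k: "i = Suc k" by (cases i) auto
  have "k < m" using assms k by auto
  hence "min (n k div 2) (n k - n k div 2) = n k div 2" using nev[of k] by linarith
  then show ?thesis using True k by (simp add: xp_def chain_canon_def Pf_Suc)
qed (auto simp: chain_canon_def)

lemma edge_cases: assumes "E u v"
  obtains i j where "i < m" "j < n i" "u = c (i,j)" "v = c (i,(j+1) mod n i)"
  | i j where "i < m" "j < n i" "v = c (i,j)" "u = c (i,(j+1) mod n i)"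
  using assms unfolding chain_adj_def by blast

lemma xp_step: assumes "i < m" "j < n i"
  shows "xp (i,j) \<le> xp (i,(j+1) mod n i) + 1 \<and> xp (i,(j+1) mod n i) \<le> xp (i,j) + 1"
proof (cases "j + 1 < n i")
  case True then show ?thesis by (auto simp: xp_def)
next
  case False
  hence "j + 1 = n i" using assms by auto
  then show ?thesis by (auto simp: xp_def)
qed

lemma xp_lip: "E a b \<Longrightarrow> xp a \<le> xp b + 1 \<and> xp b \<le> xp a + 1"
proof (erule edge_cases)
  fix i j assume h: "i < m" "j < n i" "a = c (i, j)" "b = c (i, (j + 1) mod n i)"
  have "(j+1) mod n i < n i" using h by auto
  then show ?thesis using xp_step[OF h(1,2)] xp_canon h by simp
next
  fix i j assume h: "i < m" "j < n i" "b = c (i, j)" "a = c (i, (j + 1) mod n i)"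
  have "(j+1) mod n i < n i" using h by auto
  then show ?thesis using xp_step[OF h(1,2)] xp_canon h by simp
qed

lemma xp_walk: "walk E k u v \<Longrightarrow> xp v \<le> xp u + k \<and> xp u \<le> xp v + k"
  by (rule pot) (rule xp_lip)

definition cdist :: "nat \<Rightarrow> nat \<Rightarrow> nat \<Rightarrow> nat" where
  "cdist N a b = min (if a \<le> b then b - a else a - b) (N - (if a \<le> b then b - a else a - b))"

definition cp :: "nat \<Rightarrow> nat \<Rightarrow> nat \<times> nat \<Rightarrow> nat" where
  "cp i a p = cdist (n i) a (if fst p < i then 0 else if fst p > i then n i div 2 else snd p)"

lemma cp_canon: assumes "k < m" "j < n k" shows "cp i a (c (k,j)) = cp i a (k,j)"
proof (cases "j = 0 \<and> k > 0")
  case True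
  then obtain l where l: "k = Suc l" by (cases k) auto
  show ?thesis
  proof (cases "l = i")
    case True
    then show ?thesis using l \<open>j = 0 \<and> k > 0\<close> by (simp add: cp_def chain_canon_def)
  next
    case False
    then show ?thesis using l \<open>j = 0 \<and> k > 0\<close> by (auto simp add: cp_def chain_canon_def)
  qed
qed (auto simp: chain_canon_def)

lemma cp_step: assumes "k < m" "j < n k" "a < n i" "i < m"
  shows "cp i a (k,j) \<le> cp i a (k,(j+1) mod n k) + 1 \<and> cp i a (k,(j+1) mod n k) \<le> cp i a (k,j) + 1"
proof (cases "k = i")
  case True
  show ?thesis
  proof (cases "j + 1 < n i")
    case True then show ?thesis using \<open>k = i\<close> assms by (auto simp: cp_def cdist_def)
  next
    case False
    hence "j + 1 = n i" using assms \<open>k = i\<close> by auto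
    then show ?thesis using \<open>k = i\<close> assms by (auto simp: cp_def cdist_def)
  qed
qed (auto simp: cp_def)

lemma cp_lip: assumes "a < n i" "i < m" shows "E p q \<Longrightarrow> cp i a p \<le> cp i a q + 1 \<and> cp i a q \<le> cp i a p + 1"
proof (erule edge_cases)
  fix k j assume h: "k < m" "j < n k" "p = c (k, j)" "q = c (k, (j + 1) mod n k)"
  have "(j+1) mod n k < n k" using h by auto
  then show ?thesis using cp_step[OF h(1,2) assms] cp_canon h by simp
next
  fix k j assume h: "k < m" "j < n k" "q = c (k, j)" "p = c (k, (j + 1) mod n k)"
  have "(j+1) mod n k < n k" using h by auto
  then show ?thesis using cp_step[OF h(1,2) assms] cp_canon h by simp
qed

lemma cyc_lower: assumes "i < m" "a < n i" "b < n i" "walk E k (c (i,a)) (c (i,b))"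
  shows "cdist (n i) a b \<le> k"
proof -
  have "cp i a (c (i,b)) \<le> cp i a (c (i,a)) + k"
    using pot[of E "cp i a", OF cp_lip[OF assms(2,1)] assms(4)] by auto
  moreover have "cp i a (c (i,b)) = cp i a (i,b)" "cp i a (c (i,a)) = cp i a (i,a)"
    using cp_canon assms by auto
  moreover have "cp i a (i,a) = 0" "cp i a (i,b) = cdist (n i) a b" by (auto simp: cp_def cdist_def)
  ultimately show ?thesis by simp
qed


lemma nbr_cyc: assumes "i < m" "0 < a" "a < n i" "a \<noteq> n i div 2" "E (i,a) w"
  shows "\<exists>k<n i. w = c (i,k)"
  using assms(5)
proof (rule edge_cases)
  fix i' j assume h: "i' < m" "j < n i'" "(i,a) = c (i', j)" "w = c (i', (j + 1) mod n i')"
  have "i' = i" using h(3) assms(4) by (auto simp: chain_canon_def split: if_splits)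
  moreover have "(j+1) mod n i' < n i'" using h by auto
  ultimately show ?thesis using h by blast
next
  fix i' j assume h: "i' < m" "j < n i'" "w = c (i', j)" "(i,a) = c (i', (j + 1) mod n i')"
  have "i' = i" using h(4) assms(4) by (auto simp: chain_canon_def split: if_splits)
  then show ?thesis using h by auto
qed

lemma nbr_any: assumes "E p w" shows "\<exists>k j. k < m \<and> j < n k \<and> w = c (k,j)"
  using assms
proof (rule edge_cases)
  fix i j assume h: "i < m" "j < n i" "p = c (i, j)" "w = c (i, (j + 1) mod n i)"
  have "(j+1) mod n i < n i" using h by auto
  then show ?thesis using h by blast
qed auto

lemma canon_pos: "0 < j \<Longrightarrow> c (i,j) = (i,j)" by (simp add: chain_canon_def)

lemma maxd_cyc: assumes "i < m" "0 < a" "a < n i" "a \<noteq> n i div 2" "0 < b" "b < n i"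
  "cdist (n i) a b = n i div 2"
  shows "max_distant E (i,a) (i,b)"
  unfolding max_distant_def
proof (intro allI impI)
  fix w assume "E (i,a) w"
  then obtain k where k: "k < n i" "w = c (i,k)" using nbr_cyc assms by blast
  obtain l where l: "l \<le> n i div 2" "walk E l (c (i,b)) (c (i,k))" using cyc_near assms k by blast
  have "gdist E (i,b) w \<le> n i div 2" using gdist_le[OF l(2)] l(1) k canon_pos assms by auto
  moreover
  obtain l2 where l2: "walk E l2 (c (i,a)) (c (i,b))" using cyc_near assms by blast
  have "n i div 2 \<le> gdist E (i,a) (i,b)"
    using gdist_ge[of E l2 "(i,a)" "(i,b)" "n i div 2"] l2 cyc_lower[of i a b] assms canon_pos
    by auto
  ultimately show "gdist E (i,b) w \<le> gdist E (i,a) (i,b)" by linarith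
qed

lemma mmd_cyc: assumes "i < m" "1 \<le> j" "j < n i div 2"
  shows "mutually_max_distant E (i,j) (i,j + n i div 2)"
proof -
  have e: "n i = 2 * (n i div 2)" using nev assms by auto
  show ?thesis unfolding mutually_max_distant_def
    using assms e
    by (intro conjI maxd_cyc) (auto simp: cdist_def)
qed


abbreviation "L \<equiv> Pf n m"
abbreviation "z \<equiv> (m - 1, n (m - 1) div 2)"

lemma Pm: "Pf n m = Pf n (m-1) + n (m-1) div 2"
  using Pf_Suc[of n "m-1"] m2 by (simp add: Suc_diff_1[symmetric])

lemma hz: "0 < n (m-1) div 2" "n (m-1) div 2 < n (m-1)" using n4[of "m-1"] m2 by auto

lemma z_canon: "c (m-1, n (m-1) div 2) = z" using hz by (simp add: canon_pos)

lemma walk0z: "walk E L (0,0) z"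
proof -
  have w1: "walk E (Pf n (m-1) - Pf n 0) (c (0,0)) (c (m-1,0))" using chainG[of 0 "m-1"] m2 by auto
  have w2: "walk E (n (m-1) div 2 - 0) (c (m-1,0)) (c (m-1,n (m-1) div 2))"
    using walk_ba[of "m-1" 0 "n (m-1) div 2"] hz m2 by auto
  show ?thesis using walk_app[OF w1 w2] z_canon Pm by (simp add: Pf_def chain_canon_def)
qed

lemma xp0: "xp (0,0) = 0" by (simp add: xp_def Pf_def)
lemma xpz: "xp z = L"
proof -
  have "min (n (m-1) div 2) (n (m-1) - n (m-1) div 2) = n (m-1) div 2" using nev[of "m-1"] m2 by linarith
  thus ?thesis using Pm by (simp add: xp_def)
qed

lemma gd0z: "L \<le> gdist E (0,0) z" "L \<le> gdist E z (0,0)"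
  using gdist_ge[of E L "(0,0)" z L, OF walk0z] xp_walk[of _ "(0,0)" z] xp0 xpz
   apply fastforce
  using gdist_ge[of E L z "(0,0)" L, OF wrev[OF walk0z]] xp_walk[of _ z "(0,0)"] xp0 xpz
  by fastforce

lemma reach0: assumes "k < m" "j < n k" shows "gdist E (0,0) (c (k,j)) \<le> L"
proof -
  have w1: "walk E (Pf n k - Pf n 0) (c (0,0)) (c (k,0))" using chainG[of 0 k] assms by auto
  obtain l where l: "l \<le> n k div 2" "walk E l (c (k,0)) (c (k,j))" using cyc_near[of k 0 j] assms n4 by force
  have "walk E (Pf n k + l) (0,0) (c (k,j))" using walk_app[OF w1 l(2)] by (simp add: Pf_def chain_canon_def)
  moreover have "Pf n k + l \<le> L" using l(1) Pf_Suc[of n k] Pf_mono[of "Suc k" m n] assms by linarith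
  ultimately show ?thesis using gdist_le by fastforce
qed

lemma reachz: assumes "k < m" "j < n k" shows "gdist E z (c (k,j)) \<le> L"
proof (cases "k = m - 1")
  case True
  have km: "m - 1 < m" "j < n (m-1)" using assms True by auto
  obtain l where l: "l \<le> n (m-1) div 2" "walk E l (c (m-1, n (m-1) div 2)) (c (m-1,j))"
    using cyc_near[of "m-1" "n (m-1) div 2" j] km hz by blast
  have w: "walk E l z (c (m-1,j))" using l(2) unfolding z_canon .
  have "n (m-1) div 2 \<le> L" unfolding Pm by (rule le_add2)
  then have "l \<le> L" using l(1) by linarith
  then show ?thesis using gdist_le[OF w] True by simp
next
  case False
  hence km: "k < m - 1" using assms by auto
  have hk: "n k div 2 < n k" using n4[OF assms(1)] by simp
  obtain l where l: "l \<le> n k div 2" "walk E l (c (k,j)) (c (k,n k div 2))" using cyc_near[of k j "n k div 2"] assms hk by blast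
  have ck: "c (k, n k div 2) = c (Suc k, 0)" using n4[OF assms(1)] by (auto simp add: chain_canon_def)
  have w1: "walk E (Pf n (m-1) - Pf n (Suc k)) (c (Suc k,0)) (c (m-1,0))" using chainG[of "Suc k" "m-1"] km by auto
  have w2: "walk E (n (m-1) div 2 - 0) (c (m-1,0)) (c (m-1,n (m-1) div 2))"
    using walk_ba[of "m-1" 0 "n (m-1) div 2"] hz m2 by auto
  have w: "walk E (l + (Pf n (m-1) - Pf n (Suc k)) + (n (m-1) div 2 - 0)) (c (k,j)) z"
    using walk_app[OF walk_app[OF l(2)[unfolded ck] w1] w2] unfolding z_canon .
  have le: "l + (Pf n (m-1) - Pf n (Suc k)) + (n (m-1) div 2 - 0) \<le> L"
  proof -
    have a: "Pf n (Suc k) \<le> Pf n (m-1)" using km by (intro Pf_mono) simp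
    have d: "L = Pf n (m-1) + n (m-1) div 2" by (rule Pm)
    have e: "\<And>(a::nat) pk pm h. pk \<le> pm \<Longrightarrow> a + (pm - pk) + (h - 0) \<le> pm + h + a - pk"
      by linarith
    have f: "l \<le> Pf n (Suc k)" using l(1) Pf_Suc[of n k] by linarith
    show ?thesis unfolding d using e[OF a, of l "n (m-1) div 2"] f by linarith
  qed
  show ?thesis using gdist_le[OF wrev[OF w]] le by linarith
qed

lemma mmd_end: "mutually_max_distant E (0,0) z"
  unfolding mutually_max_distant_def max_distant_def
proof (intro conjI allI impI)
  fix w assume "E (0,0) w"
  then obtain k j where kj: "k < m" "j < n k" and wk: "w = c (k,j)" using nbr_any by blast
  have g: "gdist E z (c (k,j)) \<le> L" by (rule reachz[OF kj])
  show "gdist E z w \<le> gdist E (0,0) z" unfolding wk by (rule order_trans[OF g gd0z(1)])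
next
  fix w assume "E z w"
  then obtain k j where kj: "k < m" "j < n k" and wk: "w = c (k,j)" using nbr_any by blast
  have g: "gdist E (0,0) (c (k,j)) \<le> L" by (rule reach0[OF kj])
  show "gdist E (0,0) w \<le> gdist E z (0,0)" unfolding wk by (rule order_trans[OF g gd0z(2)])
qed


lemma xpT: "i < m \<Longrightarrow> n i div 2 \<le> a \<Longrightarrow> a < n i \<Longrightarrow> xp (i,a) = Pf n i + (n i - a)"
  using nev[of i] by (simp add: xp_def)

lemma T_walk: assumes "i < m" "k < m" "n i div 2 \<le> a" "a < n i" "n k div 2 \<le> b" "b < n k"
  "xp (i,a) \<le> xp (k,b)"
  shows "walk E (xp (k,b) - xp (i,a)) (i,a) (k,b)"
proof -
  have xa: "xp (i,a) = Pf n i + (n i - a)" using xpT assms by auto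
  have xb: "xp (k,b) = Pf n k + (n k - b)" using xpT assms by auto
  have a0: "0 < a" "0 < b" using assms n4[of i] n4[of k] by auto
  consider "i = k" | "i < k" | "k < i" by linarith
  then show ?thesis
  proof cases
    case 1
    hence "b \<le> a" using assms xa xb by simp
    then have "walk E (a - b) (c (i,a)) (c (i,b))" using walk_ab assms by auto
    moreover have "xp (k,b) - xp (i,a) = a - b" using xa xb 1 assms by simp
    ultimately show ?thesis using a0 canon_pos 1 by simp
  next
    case 2
    have hi: "n i div 2 < n i" using n4[OF assms(1)] by simp
    have w1: "walk E (a - n i div 2) (c (i,a)) (c (i,n i div 2))" using walk_ab assms by auto
    have ci: "c (i, n i div 2) = c (Suc i, 0)" using n4[OF assms(1)] by (auto simp add: chain_canon_def)
    have w2: "walk E (Pf n k - Pf n (Suc i)) (c (Suc i,0)) (c (k,0))" using chainG[of "Suc i" k] 2 assms by auto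
    have w3: "walk E (n k - b) (c (k,0)) (c (k,b))" using walk_0b assms by auto
    have w: "walk E (a - n i div 2 + (Pf n k - Pf n (Suc i)) + (n k - b)) (i,a) (k,b)"
      using walk_app[OF walk_app[OF w1[unfolded ci] w2] w3] a0 canon_pos by simp
    have pm: "Pf n (Suc i) \<le> Pf n k" using 2 by (intro Pf_mono) simp
    have ps: "Pf n (Suc i) = Pf n i + n i div 2" by (rule Pf_Suc)
    have ev: "n i = 2 * (n i div 2)" using nev assms by auto
    have "a - n i div 2 + (Pf n k - Pf n (Suc i)) + (n k - b) = xp (k,b) - xp (i,a)"
      unfolding xa xb using pm ps ev assms by linarith
    then show ?thesis using w by simp
  next
    case 3
    have pm: "Pf n (Suc k) \<le> Pf n i" using 3 by (intro Pf_mono) simp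
    have ps: "Pf n (Suc k) = Pf n k + n k div 2" by (rule Pf_Suc)
    have ev: "n k = 2 * (n k div 2)" using nev assms by auto
    have False using assms(7) unfolding xa xb using pm ps ev assms by linarith
    then show ?thesis ..
  qed
qed

lemma T_notmax: assumes "i < m" "k < m" "n i div 2 \<le> a" "a < n i" "n k div 2 \<le> b" "b < n k"
  "xp (i,a) \<le> xp (k,b)"
  shows "\<not> max_distant E (i,a) (k,b)"
proof -
  define w where "w = c (i,(a+1) mod n i)"
  have a0: "0 < a" using assms n4[of i] by auto
  have e: "E (i,a) w" unfolding w_def using edge[of i m a n, OF assms(1,4)] canon_pos[OF a0] by simp
  have xw: "xp w + 1 = xp (i,a)"
  proof -
    have "(a+1) mod n i < n i" using assms by auto
    hence "xp w = xp (i,(a+1) mod n i)" unfolding w_def using xp_canon assms by auto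
    moreover have "xp (i,(a+1) mod n i) + 1 = xp (i,a)"
    proof (cases "a + 1 < n i")
      case True
      then show ?thesis using xpT[of i a] xpT[of i "a+1"] assms by simp
    next
      case False
      hence "a + 1 = n i" using assms by simp
      then show ?thesis using xpT[of i a] assms by (simp add: xp_def)
    qed
    ultimately show ?thesis by simp
  qed
  define d where "d = xp (k,b) - xp (i,a)"
  have wuv: "walk E d (i,a) (k,b)" unfolding d_def by (rule T_walk[OF assms])
  have g1: "gdist E (i,a) (k,b) \<le> d" by (rule gdist_le[OF wuv])
  have wvw: "walk E (Suc d) (k,b) w" by (rule walk_snoc[OF wrev[OF wuv] e])
  have g2: "Suc d \<le> gdist E (k,b) w"
  proof (rule gdist_ge[OF wvw])
    fix l assume "walk E l (k,b) w"
    then have "xp (k,b) \<le> xp w + l" using xp_walk by blast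
    then show "Suc d \<le> l" using xw assms(7) unfolding d_def by linarith
  qed
  show ?thesis unfolding max_distant_def using e g1 g2 by fastforce
qed


abbreviation "VV \<equiv> chain_vertices m n"
abbreviation "SR \<equiv> strong_resolving_adj VV E"
definition "SS = insert (0,0) (Sigma {..<m} (\<lambda>i. {1..<n i div 2}))"

lemma V_mem: "i < m \<Longrightarrow> j < n i \<Longrightarrow> c (i,j) \<in> VV"
  unfolding chain_vertices_def by auto

lemma V_cases: assumes "u \<in> VV" "u \<notin> SS"
  shows "\<exists>i a. u = (i,a) \<and> i < m \<and> n i div 2 \<le> a \<and> a < n i"
proof -
  obtain i j where ij: "i < m" "j < n i" "u = c (i,j)" using assms(1) unfolding chain_vertices_def by auto
  show ?thesis
  proof (cases "j = 0 \<and> i > 0")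
    case True
    then obtain l where l: "i = Suc l" by (cases i) auto
    have "l < m" using ij l by auto
    then show ?thesis using True l ij n4[of l] by (auto simp: chain_canon_def)
  next
    case False
    hence "u = (i,j)" using ij by (auto simp: chain_canon_def)
    then show ?thesis using assms(2) ij False by (auto simp: SS_def)
  qed
qed

lemma finV: "finite VV" unfolding chain_vertices_def
  by (rule finite_imageI) (rule finite_subset[of _ "{..<m} \<times> {..<Max (n ` {..<m})}"], auto,
      metis Max_ge finite_imageI finite_lessThan imageI lessThan_iff order_less_le_trans)

lemma SS_sub: "SS \<subseteq> VV"
proof
  fix p assume "p \<in> SS"
  then show "p \<in> VV"
  proof (cases "p = (0,0)")
    case True
    then show ?thesis using V_mem[of 0 0] m2 n4[of 0] by (simp add: chain_canon_def)
  next
    case False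
    then obtain i j where "p = (i,j)" "i < m" "1 \<le> j" "j < n i div 2" using \<open>p \<in> SS\<close> by (auto simp: SS_def)
    then show ?thesis using V_mem[of i j] canon_pos[of j i] by auto
  qed
qed

lemma cover: "is_vertex_cover VV SR SS"
  unfolding is_vertex_cover_def
proof (intro conjI SS_sub ballI impI)
  fix u v assume uv: "u \<in> VV" "v \<in> VV" "SR u v"
  show "u \<in> SS \<or> v \<in> SS"
  proof (rule ccontr)
    assume "\<not> (u \<in> SS \<or> v \<in> SS)"
    then obtain i a k b where u: "u = (i,a)" "i < m" "n i div 2 \<le> a" "a < n i"
      and v: "v = (k,b)" "k < m" "n k div 2 \<le> b" "b < n k" using V_cases uv by meson
    have mm: "max_distant E u v" "max_distant E v u" using uv(3)
      unfolding strong_resolving_adj_def mutually_max_distant_def by auto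
    show False
    proof (cases "xp (i,a) \<le> xp (k,b)")
      case True
      then show False using T_notmax[OF u(2) v(2) u(3,4) v(3,4)] mm u v by simp
    next
      case False
      then show False using T_notmax[OF v(2) u(2) v(3,4) u(3,4)] mm u v by simp
    qed
  qed
qed

lemma card_I: "card (Sigma {..<m} (\<lambda>i. {1..<n i div 2})) = (\<Sum>i<m. (n i - 2) div 2)"
  by (subst card_SigmaI) (auto intro!: sum.cong)

lemma card_SS: "card SS = 1 + (\<Sum>i<m. (n i - 2) div 2)"
proof -
  have "(0,0) \<notin> Sigma {..<m} (\<lambda>i. {1..<n i div 2})" by auto
  moreover have "finite (Sigma {..<m} (\<lambda>i. {1..<n i div 2}))" by auto
  ultimately show ?thesis unfolding SS_def using card_I by simp
qed

lemma lower: assumes "is_vertex_cover VV SR S'" shows "1 + (\<Sum>i<m. (n i - 2) div 2) \<le> card S'"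
proof -
  define I where "I = Sigma {..<m} (\<lambda>i. {1..<n i div 2})"
  define g where "g p = (if p \<in> S' then p else (fst p, snd p + n (fst p) div 2))" for p :: "nat \<times> nat"
  have sub: "S' \<subseteq> VV" and cov: "\<And>u v. u \<in> VV \<Longrightarrow> v \<in> VV \<Longrightarrow> SR u v \<Longrightarrow> u \<in> S' \<or> v \<in> S'"
    using assms unfolding is_vertex_cover_def by auto
  have fin: "finite S'" using finite_subset[OF sub finV] .
  have gS: "g p \<in> S'" if "p \<in> I" for p
  proof -
    have pI: "p \<in> Sigma {..<m} (\<lambda>i. {1..<n i div 2})" using that unfolding I_def .
    obtain i j where p: "p = (i,j)" "i < m" "1 \<le> j" "j < n i div 2" using pI by (cases p) auto
    have "(i,j) \<in> VV" using V_mem[of i j] canon_pos[of j i] p by auto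
    moreover have "(i,j + n i div 2) \<in> VV" using V_mem[of i "j + n i div 2"] canon_pos[of "j + n i div 2" i] p nev[of i] by auto
    moreover have "SR (i,j) (i,j + n i div 2)"
      using calculation mmd_cyc[OF p(2-4)] unfolding strong_resolving_adj_def by auto
    ultimately have "(i,j) \<in> S' \<or> (i,j + n i div 2) \<in> S'" using cov by blast
    then show ?thesis unfolding g_def p by auto
  qed
  have inj: "inj_on g I"
  proof (rule inj_onI)
    fix p q assume pq: "p \<in> I" "q \<in> I" "g p = g q"
    obtain i j where p: "p = (i,j)" "j < n i div 2" using pq(1) unfolding I_def by auto
    obtain k l where q: "q = (k,l)" "l < n k div 2" using pq(2) unfolding I_def by auto
    show "p = q" using pq(3) p q unfolding g_def by (auto split: if_splits)
  qed
  define s where "s = (if (0,0) \<in> S' then (0::nat,0::nat) else z)"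
  have zV: "z \<in> VV" using V_mem[of "m-1" "n (m-1) div 2"] z_canon hz m2 by auto
  have oV: "(0,0) \<in> VV" using V_mem[of 0 0] m2 n4[of 0] by (simp add: chain_canon_def)
  have "s \<in> S'" using cov[OF oV zV] mmd_end unfolding s_def strong_resolving_adj_def using oV zV by auto
  moreover have "s \<notin> g ` I"
  proof
    assume "s \<in> g ` I"
    then obtain i j where p: "(i,j) \<in> I" "s = g (i,j)" by auto
    have j: "1 \<le> j" "j < n i div 2" using p(1) unfolding I_def by auto
    show False using p(2) j unfolding s_def g_def by (auto split: if_splits)
  qed
  ultimately have "insert s (g ` I) \<subseteq> S'" using gS by auto
  hence "card (insert s (g ` I)) \<le> card S'" using fin by (rule card_mono[rotated])
  moreover have "card (insert s (g ` I)) = 1 + card I"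
    using \<open>s \<notin> g ` I\<close> card_image[OF inj] by (simp add: I_def)
  ultimately show ?thesis using card_I unfolding I_def by simp
qed

theorem main: "vertex_cover_number VV SR = 1 + (\<Sum>i<m. (n i - 2) div 2)"
  unfolding vertex_cover_number_def
proof (rule Min_eqI)
  show "finite {card S |S. is_vertex_cover VV SR S}"
    by (rule finite_subset[of _ "card ` Pow VV"]) (auto simp: is_vertex_cover_def finV)
  show "\<And>y. y \<in> {card S |S. is_vertex_cover VV SR S} \<Longrightarrow> 1 + (\<Sum>i<m. (n i - 2) div 2) \<le> y"
    using lower by auto
  show "1 + (\<Sum>i<m. (n i - 2) div 2) \<in> {card S |S. is_vertex_cover VV SR S}"
    using cover card_SS by (metis (mono_tags, lifting) mem_Collect_eq)
qed

end

theorem lemma3p4: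
  fixes m :: nat and n :: "nat \<Rightarrow> nat"
  assumes "m \<ge> 2"
    and "\<forall>i<m. n i \<ge> 4 \<and> even (n i)"
  shows "vertex_cover_number (chain_vertices m n)
           (strong_resolving_adj (chain_vertices m n) (chain_adj m n))
         = 1 + (\<Sum>i<m. (n i - 2) div 2)"
proof -
  interpret ch m n using assms by unfold_locales
  show ?thesis by (rule main)
qed

end
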